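(* Assume the setting in the context. Let $x_i,x_j\in X$ be distinct. (i) If there exist $G_1,G_2\in\mathcal G$ and $M,N\subseteq X\setminus\{x_i,x_j\}$ with $x_i-G_1(M\cup\{x_j\})\perp\!\!\!\perp x_j-G_2(N)$, then $(x_i,x_j)$ is not invisible and $x_i$ is not a parent of $x_j$. (ii) If there exist $G_1,G_2\in\mathcal G$ and $M,N\subseteq X\setminus\{x_i,x_j\}$ with $x_i-G_1(M)\perp\!\!\!\perp x_j-G_2(N\cup\{x_i\})$, then $(x_i,x_j)$ is not invisible and $x_j$ is not a parent of $x_i$. (iii) If the hypotheses of both (i) and (ii) hold, then $(x_i,x_j)$ is a visible non-edge.
   Context: Model: $X$ is a finite set of observed random variables and $U$ a finite set of unobserved random variables; $V=X\cup U$ and $G=(V,E)$ is a DAG on $V$. Each $v_i\in V$ satisfies $v_i=\sum_{x_j\in \mathrm{pa}(v_i)\cap X} f^{(i)}_j(x_j)+\sum_{u_k\in\mathrm{pa}(v_i)\cap U} f^{(i)}_k(u_k)+n_i$, where the $f$'s are nonlinear functions and the external noises $n_i$ are jointly independent. "Parent", "ancestor", "path", "d-separation" refer to $G$ (a path has distinct vertices). Causal Faithfulness Condition (CFC): any conditional independence among variables of $V$ that is not entailed by d-separation in $G$ does not hold. $\perp\!\!\!\perp$ denotes statistical independence, $\not\perp\!\!\!\perp$ dependence. Function class: $\mathcal G$ is a class of generalized additive functions: for $G\in\mathcal G$ and a set $M$ of observed variables, $G(M)=\sum_{x_m\in M} g_m(x_m)$ (with $G(\emptyset)=0$). It satisfies: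 for any $x_i,x_j\in X$, sets $M,N\subseteq X$, $G_1,G_2\in\mathcal G$ and external noise $n_k$, if $n_k\not\perp\!\!\!\perp x_i-G_1(M)$ and $n_k\not\perp\!\!\!\perp x_j-G_2(N)$ then $x_i-G_1(M)\not\perp\!\!\!\perp x_j-G_2(N)$. Definitions, for $X'\subseteq X$ and $x_i,x_j\in X'$: an unobserved causal path (UCP) from $x_i$ to $x_j$ w.r.t. $X'$ is a directed path $x_i\to\cdots\to v_k\to x_j$ in $G$ with $v_k\notin X'$; an unobserved backdoor path (UBP) between $x_i$ and $x_j$ w.r.t. $X'$ is a path $x_i\leftarrow v_k\leftarrow\cdots\leftarrow v\to\cdots\to v_l\to x_j$ with $v_k,v_l\notin X'$ (allowing $v=v_k$, $v=v_l$, or $v=v_k=v_l$; $v$ may be in $X'$). "UBP/UCP between $x_i$ and $x_j$" means a UBP or a UCP in either direction. $x_j$ is a visible parent of $x_i$ w.r.t. $X'$ if $x_j$ is a parent of $x_i$ and there is no UBP/UCP between them w.r.t. $X'$; $(x_i,x_j)$ is a visible non-edge w.r.t. $X'$ if there is no edge between them and no UBP/UCP between them w.r.t. $X'$; $(x_i,x_j)$ is invisible w.r.t. $X'$ if there is a UBP/UCP between them w.r.t. $X'$. When $X'$ is omitted, $X'=X$. Standing facts (taken as known), for $X'\subseteq X$ and distinct $x_i,x_j\in X'$: (F1) $x_j$ is a visible parent of $x_i$ w.r.t. $X'$ iff [for all $G_1,G_2\in\mathcal G$, $M\subseteq X'\setminus\{x_i,x_j\}$, $N\subseteq X'\setminus\{x_j\}$: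 $x_i-G_1(M)\not\perp\!\!\!\perp x_j-G_2(N)$] and [there exist $G_1,G_2\in\mathcal G$, $M\subseteq X'\setminus\{x_i\}$, $N\subseteq X'\setminus\{x_i,x_j\}$ with $x_i-G_1(M)\perp\!\!\!\perp x_j-G_2(N)$]. (F2) $(x_i,x_j)$ is a visible non-edge w.r.t. $X'$ iff there exist $G_1,G_2\in\mathcal G$ and $M,N\subseteq X'\setminus\{x_i,x_j\}$ with $x_i-G_1(M)\perp\!\!\!\perp x_j-G_2(N)$. (F3) $(x_i,x_j)$ is invisible w.r.t. $X'$ iff for all $M\subseteq X'\setminus\{x_i\}$, $N\subseteq X'\setminus\{x_j\}$, $G_1,G_2\in\mathcal G$: $x_i-G_1(M)\not\perp\!\!\!\perp x_j-G_2(N)$. *)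

theory Defs
  imports "HOL-Probability.Probability"
begin

definition is_parent :: "('v \<times> 'v) set \<Rightarrow> 'v \<Rightarrow> 'v \<Rightarrow> bool" where
  "is_parent E p c \<longleftrightarrow> (p, c) \<in> E"

definition dag :: "'v set \<Rightarrow> ('v \<times> 'v) set \<Rightarrow> bool" where
  "dag V E \<longleftrightarrow> E \<subseteq> V \<times> V \<and> acyclic E"

definition is_path :: "('v \<times> 'v) set \<Rightarrow> 'v list \<Rightarrow> bool" where
  "is_path E p \<longleftrightarrow> 2 \<le> length p \<and> distinct p \<and>
     (\<forall>k. Suc k < length p \<longrightarrow> (p!k, p!Suc k) \<in> E \<or> (p!Suc k, p!k) \<in> E)"

definition directed_path :: "('v \<times> 'v) set \<Rightarrow> 'v list \<Rightarrow> bool" where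
  "directed_path E p \<longleftrightarrow> 2 \<le> length p \<and> distinct p \<and>
     (\<forall>k. Suc k < length p \<longrightarrow> (p!k, p!Suc k) \<in> E)"

definition UCP :: "('v \<times> 'v) set \<Rightarrow> 'v set \<Rightarrow> 'v \<Rightarrow> 'v \<Rightarrow> bool" where
  "UCP E X' a b \<longleftrightarrow> (\<exists>p. directed_path E p \<and> hd p = a \<and> last p = b \<and>
      p ! (length p - 2) \<notin> X')"

text \<open>Unobserved backdoor path between a and b w.r.t. X':
  a \<leftarrow> v_k \<leftarrow> ... \<leftarrow> v \<rightarrow> ... \<rightarrow> v_l \<rightarrow> b with v_k, v_l \<notin> X';
  the source v sits at position c, with 1 \<le> c \<le> length p - 2.\<close>
definition UBP :: "('v \<times> 'v) set \<Rightarrow> 'v set \<Rightarrow> 'v \<Rightarrow> 'v \<Rightarrow> bool" where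
  "UBP E X' a b \<longleftrightarrow> (\<exists>p c. is_path E p \<and> hd p = a \<and> last p = b \<and>
      1 \<le> c \<and> c + 2 \<le> length p \<and>
      (\<forall>k. k < c \<longrightarrow> (p!Suc k, p!k) \<in> E) \<and>
      (\<forall>k. c \<le> k \<and> Suc k < length p \<longrightarrow> (p!k, p!Suc k) \<in> E) \<and>
      p!1 \<notin> X' \<and> p ! (length p - 2) \<notin> X')"

definition invisible :: "('v \<times> 'v) set \<Rightarrow> 'v set \<Rightarrow> 'v \<Rightarrow> 'v \<Rightarrow> bool" where
  "invisible E X' a b \<longleftrightarrow> UBP E X' a b \<or> UBP E X' b a \<or> UCP E X' a b \<or> UCP E X' b a"

definition visible_parent :: "('v \<times> 'v) set \<Rightarrow> 'v set \<Rightarrow> 'v \<Rightarrow> 'v \<Rightarrow> bool" where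
  "visible_parent E X' a b \<longleftrightarrow> is_parent E b a \<and> \<not> invisible E X' a b"

definition visible_non_edge :: "('v \<times> 'v) set \<Rightarrow> 'v set \<Rightarrow> 'v \<Rightarrow> 'v \<Rightarrow> bool" where
  "visible_non_edge E X' a b \<longleftrightarrow> (a, b) \<notin> E \<and> (b, a) \<notin> E \<and> \<not> invisible E X' a b"

definition descendants :: "('v \<times> 'v) set \<Rightarrow> 'v \<Rightarrow> 'v set" where
  "descendants E w = {d. (w, d) \<in> E\<^sup>*}"

definition d_separated :: "('v \<times> 'v) set \<Rightarrow> 'v set \<Rightarrow> 'v set \<Rightarrow> 'v set \<Rightarrow> bool" where
  "d_separated E A B Z \<longleftrightarrow> (\<forall>p. is_path E p \<and> hd p \<in> A \<and> last p \<in> B \<longrightarrow>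
     (\<exists>k. 0 < k \<and> Suc k < length p \<and>
        (let collider = ((p!(k-1), p!k) \<in> E \<and> (p!Suc k, p!k) \<in> E) in
          (\<not> collider \<and> p!k \<in> Z) \<or> (collider \<and> descendants E (p!k) \<inter> Z = {}))))"

definition gen_sigma :: "'a measure \<Rightarrow> ('v \<Rightarrow> 'a \<Rightarrow> real) \<Rightarrow> 'v set \<Rightarrow> 'a measure" where
  "gen_sigma M val S = sigma (space M) {val s -` B \<inter> space M | s B. s \<in> S \<and> B \<in> sets borel}"

definition cond_indep :: "'a measure \<Rightarrow> ('v \<Rightarrow> 'a \<Rightarrow> real) \<Rightarrow> 'v set \<Rightarrow> 'v set \<Rightarrow> 'v set \<Rightarrow> bool" where
  "cond_indep M val A B C \<longleftrightarrow>
     (\<forall>SA \<in> sets (gen_sigma M val A). \<forall>SB \<in> sets (gen_sigma M val B).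
        AE \<omega> in M. real_cond_exp M (gen_sigma M val C) (indicator (SA \<inter> SB)) \<omega> =
          real_cond_exp M (gen_sigma M val C) (indicator SA) \<omega> *
          real_cond_exp M (gen_sigma M val C) (indicator SB) \<omega>)"

definition CFC :: "'a measure \<Rightarrow> 'v set \<Rightarrow> ('v \<times> 'v) set \<Rightarrow> ('v \<Rightarrow> 'a \<Rightarrow> real) \<Rightarrow> bool" where
  "CFC M V E val \<longleftrightarrow> (\<forall>A B C. A \<subseteq> V \<and> B \<subseteq> V \<and> C \<subseteq> V \<and> A \<inter> B = {} \<and> A \<inter> C = {} \<and> B \<inter> C = {}
      \<and> cond_indep M val A B C \<longrightarrow> d_separated E A B C)"

definition nonlinear :: "(real \<Rightarrow> real) \<Rightarrow> bool" where
  "nonlinear g \<longleftrightarrow> \<not> (\<exists>a b. \<forall>t. g t = a * t + b)"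

definition model :: "'a measure \<Rightarrow> 'v set \<Rightarrow> 'v set \<Rightarrow> 'v set \<Rightarrow> ('v \<times> 'v) set \<Rightarrow>
    ('v \<Rightarrow> 'a \<Rightarrow> real) \<Rightarrow> ('v \<Rightarrow> 'a \<Rightarrow> real) \<Rightarrow> ('v \<Rightarrow> 'v \<Rightarrow> real \<Rightarrow> real) \<Rightarrow> bool" where
  "model M V X U E val noise f \<longleftrightarrow>
     prob_space M \<and> finite V \<and> V = X \<union> U \<and> X \<inter> U = {} \<and> dag V E \<and>
     (\<forall>v\<in>V. noise v \<in> borel_measurable M \<and> val v \<in> borel_measurable M) \<and>
     (\<forall>v\<in>V. \<forall>p\<in>V. (p, v) \<in> E \<longrightarrow> f v p \<in> borel_measurable borel \<and> nonlinear (f v p)) \<and>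
     (\<forall>v\<in>V. \<forall>\<omega>\<in>space M.
        val v \<omega> = (\<Sum>p\<in>{p\<in>V. (p, v) \<in> E}. f v p (val p \<omega>)) + noise v \<omega>) \<and>
     prob_space.indep_vars M (\<lambda>_. borel) noise V"

definition resid :: "('v \<Rightarrow> 'a \<Rightarrow> real) \<Rightarrow> 'v \<Rightarrow> ('v \<Rightarrow> real \<Rightarrow> real) \<Rightarrow> 'v set \<Rightarrow> 'a \<Rightarrow> real" where
  "resid val x g S = (\<lambda>\<omega>. val x \<omega> - (\<Sum>m\<in>S. g m (val m \<omega>)))"

abbreviation indep :: "'a measure \<Rightarrow> ('a \<Rightarrow> real) \<Rightarrow> ('a \<Rightarrow> real) \<Rightarrow> bool" where
  "indep M a b \<equiv> prob_space.indep_var M borel a borel b"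

definition GA_class :: "'a measure \<Rightarrow> 'v set \<Rightarrow> 'v set \<Rightarrow> ('v \<Rightarrow> 'a \<Rightarrow> real) \<Rightarrow> ('v \<Rightarrow> 'a \<Rightarrow> real)
    \<Rightarrow> ('v \<Rightarrow> real \<Rightarrow> real) set \<Rightarrow> bool" where
  "GA_class M V X val noise \<G> \<longleftrightarrow>
     (\<forall>g\<in>\<G>. \<forall>m. g m \<in> borel_measurable borel) \<and>
     (\<forall>xi\<in>X. \<forall>xj\<in>X. \<forall>S T. \<forall>G1\<in>\<G>. \<forall>G2\<in>\<G>. \<forall>k\<in>V.
        S \<subseteq> X \<and> T \<subseteq> X \<and>
        \<not> indep M (noise k) (resid val xi G1 S) \<and> \<not> indep M (noise k) (resid val xj G2 T) \<longrightarrow>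
        \<not> indep M (resid val xi G1 S) (resid val xj G2 T))"

end

theory Submission
  imports Defs
begin

lemma indep_sym:
  assumes "prob_space M" "indep M a b" shows "indep M b a"
proof -
  interpret prob_space M by fact
  have "(random_variable borel a \<and> random_variable borel b) \<and>
    indep_set (sigma_sets (space M) {a -` A \<inter> space M | A. A \<in> sets borel})
      (sigma_sets (space M) {b -` A \<inter> space M | A. A \<in> sets borel})"
    using assms(2) by (simp only: indep_var_eq)
  moreover have "indep_set P Q \<Longrightarrow> indep_set Q P" for P Q
    unfolding indep_sets2_eq by (metis (no_types, lifting) inf_commute mult.commute)
  ultimately show ?thesis by (simp only: indep_var_eq)
qed

theorem lemma9:
  fixes M :: "'a measure" and V X U :: "'v set" and E :: "('v \<times> 'v) set"
    and val noise :: "'v \<Rightarrow> 'a \<Rightarrow> real" and f :: "'v \<Rightarrow> 'v \<Rightarrow> real \<Rightarrow> real"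
    and \<G> :: "('v \<Rightarrow> real \<Rightarrow> real) set" and xi xj :: 'v
  assumes mdl: "model M V X U E val noise f"
    and cfc: "CFC M V E val"
    and cls: "GA_class M V X val noise \<G>"
    and F1: "\<And>X' a b. X' \<subseteq> X \<Longrightarrow> a \<in> X' \<Longrightarrow> b \<in> X' \<Longrightarrow> a \<noteq> b \<Longrightarrow>
       visible_parent E X' a b \<longleftrightarrow>
         ((\<forall>G1\<in>\<G>. \<forall>G2\<in>\<G>. \<forall>S T. S \<subseteq> X' - {a, b} \<and> T \<subseteq> X' - {b} \<longrightarrow>
              \<not> indep M (resid val a G1 S) (resid val b G2 T)) \<and>
          (\<exists>G1\<in>\<G>. \<exists>G2\<in>\<G>. \<exists>S T. S \<subseteq> X' - {a} \<and> T \<subseteq> X' - {a, b} \<and>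
              indep M (resid val a G1 S) (resid val b G2 T)))"
    and F2: "\<And>X' a b. X' \<subseteq> X \<Longrightarrow> a \<in> X' \<Longrightarrow> b \<in> X' \<Longrightarrow> a \<noteq> b \<Longrightarrow>
       visible_non_edge E X' a b \<longleftrightarrow>
         (\<exists>G1\<in>\<G>. \<exists>G2\<in>\<G>. \<exists>S T. S \<subseteq> X' - {a, b} \<and> T \<subseteq> X' - {a, b} \<and>
              indep M (resid val a G1 S) (resid val b G2 T))"
    and F3: "\<And>X' a b. X' \<subseteq> X \<Longrightarrow> a \<in> X' \<Longrightarrow> b \<in> X' \<Longrightarrow> a \<noteq> b \<Longrightarrow>
       invisible E X' a b \<longleftrightarrow>
         (\<forall>S T. \<forall>G1\<in>\<G>. \<forall>G2\<in>\<G>. S \<subseteq> X' - {a} \<and> T \<subseteq> X' - {b} \<longrightarrow>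
              \<not> indep M (resid val a G1 S) (resid val b G2 T))"
    and xi: "xi \<in> X" and xj: "xj \<in> X" and dist: "xi \<noteq> xj"
  shows "((\<exists>G1\<in>\<G>. \<exists>G2\<in>\<G>. \<exists>S T. S \<subseteq> X - {xi, xj} \<and> T \<subseteq> X - {xi, xj} \<and>
              indep M (resid val xi G1 (S \<union> {xj})) (resid val xj G2 T))
           \<longrightarrow> \<not> invisible E X xi xj \<and> \<not> is_parent E xi xj)
       \<and> ((\<exists>G1\<in>\<G>. \<exists>G2\<in>\<G>. \<exists>S T. S \<subseteq> X - {xi, xj} \<and> T \<subseteq> X - {xi, xj} \<and>
              indep M (resid val xi G1 S) (resid val xj G2 (T \<union> {xi})))
           \<longrightarrow> \<not> invisible E X xi xj \<and> \<not> is_parent E xj xi)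
       \<and> (((\<exists>G1\<in>\<G>. \<exists>G2\<in>\<G>. \<exists>S T. S \<subseteq> X - {xi, xj} \<and> T \<subseteq> X - {xi, xj} \<and>
              indep M (resid val xi G1 (S \<union> {xj})) (resid val xj G2 T)) \<and>
           (\<exists>G1\<in>\<G>. \<exists>G2\<in>\<G>. \<exists>S T. S \<subseteq> X - {xi, xj} \<and> T \<subseteq> X - {xi, xj} \<and>
              indep M (resid val xi G1 S) (resid val xj G2 (T \<union> {xi}))))
           \<longrightarrow> visible_non_edge E X xi xj)"
proof -
  have ps: "prob_space M" using mdl unfolding model_def by simp
  have invsym: "\<And>a b. invisible E X a b = invisible E X b a"
    unfolding invisible_def by blast
  have Xs: "X \<subseteq> X" by simp
  have I: "\<not> invisible E X xi xj \<and> \<not> is_parent E xi xj"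
    if h: "\<exists>G1\<in>\<G>. \<exists>G2\<in>\<G>. \<exists>S T. S \<subseteq> X - {xi, xj} \<and> T \<subseteq> X - {xi, xj} \<and>
              indep M (resid val xi G1 (S \<union> {xj})) (resid val xj G2 T)"
  proof -
    obtain G1 G2 S T where g: "G1\<in>\<G>" "G2\<in>\<G>" "S \<subseteq> X - {xi, xj}" "T \<subseteq> X - {xi, xj}"
      and ind: "indep M (resid val xi G1 (S \<union> {xj})) (resid val xj G2 T)" using h by blast
    have s1: "S \<union> {xj} \<subseteq> X - {xi}" using g(3) xj dist by blast
    have t1: "T \<subseteq> X - {xj}" using g(4) by blast
    have ni: "\<not> invisible E X xi xj"
    proof
      assume "invisible E X xi xj"
      with F3[OF Xs xi xj dist] have A: "\<forall>S T. \<forall>G1\<in>\<G>. \<forall>G2\<in>\<G>. S \<subseteq> X - {xi} \<and> T \<subseteq> X - {xj} \<longrightarrow>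
              \<not> indep M (resid val xi G1 S) (resid val xj G2 T)" by (rule iffD1)
      have "S \<union> {xj} \<subseteq> X - {xi} \<and> T \<subseteq> X - {xj} \<longrightarrow>
              \<not> indep M (resid val xi G1 (S \<union> {xj})) (resid val xj G2 T)"
        using A g(1) g(2) by blast
      thus False using s1 t1 ind by blast
    qed
    moreover have "\<not> is_parent E xi xj"
    proof
      assume p: "is_parent E xi xj"
      have "visible_parent E X xj xi" unfolding visible_parent_def using p ni invsym by blast
      with F1[OF Xs xj xi dist[symmetric]] have "(\<forall>G1\<in>\<G>. \<forall>G2\<in>\<G>. \<forall>S T. S \<subseteq> X - {xj, xi} \<and> T \<subseteq> X - {xi} \<longrightarrow>
              \<not> indep M (resid val xj G1 S) (resid val xi G2 T)) \<and> (\<exists>G1\<in>\<G>. \<exists>G2\<in>\<G>. \<exists>S T. S \<subseteq> X - {xj} \<and> T \<subseteq> X - {xj, xi} \<and>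
              indep M (resid val xj G1 S) (resid val xi G2 T))"
        by (rule iffD1)
      hence A: "\<forall>G1\<in>\<G>. \<forall>G2\<in>\<G>. \<forall>S T. S \<subseteq> X - {xj, xi} \<and> T \<subseteq> X - {xi} \<longrightarrow>
              \<not> indep M (resid val xj G1 S) (resid val xi G2 T)" by (rule conjunct1)
      have "T \<subseteq> X - {xj, xi} \<and> S \<union> {xj} \<subseteq> X - {xi} \<longrightarrow>
              \<not> indep M (resid val xj G2 T) (resid val xi G1 (S \<union> {xj}))"
        using A g(1) g(2) by blast
      moreover have "indep M (resid val xj G2 T) (resid val xi G1 (S \<union> {xj}))"
        using indep_sym[OF ps ind] .
      moreover have "T \<subseteq> X - {xj, xi}" using g(4) by blast
      ultimately show False using s1 by blast
    qed
    ultimately show ?thesis by blast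
  qed
  have II: "\<not> invisible E X xi xj \<and> \<not> is_parent E xj xi"
    if h: "\<exists>G1\<in>\<G>. \<exists>G2\<in>\<G>. \<exists>S T. S \<subseteq> X - {xi, xj} \<and> T \<subseteq> X - {xi, xj} \<and>
              indep M (resid val xi G1 S) (resid val xj G2 (T \<union> {xi}))"
  proof -
    obtain G1 G2 S T where g: "G1\<in>\<G>" "G2\<in>\<G>" "S \<subseteq> X - {xi, xj}" "T \<subseteq> X - {xi, xj}"
      and ind: "indep M (resid val xi G1 S) (resid val xj G2 (T \<union> {xi}))" using h by blast
    have s1: "S \<subseteq> X - {xi}" using g(3) by blast
    have s2: "S \<subseteq> X - {xi, xj}" using g(3) by blast
    have t1: "T \<union> {xi} \<subseteq> X - {xj}" using g(4) xi dist by blast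
    have ni: "\<not> invisible E X xi xj"
    proof
      assume "invisible E X xi xj"
      with F3[OF Xs xi xj dist] have A: "\<forall>S T. \<forall>G1\<in>\<G>. \<forall>G2\<in>\<G>. S \<subseteq> X - {xi} \<and> T \<subseteq> X - {xj} \<longrightarrow>
              \<not> indep M (resid val xi G1 S) (resid val xj G2 T)" by (rule iffD1)
      have "S \<subseteq> X - {xi} \<and> T \<union> {xi} \<subseteq> X - {xj} \<longrightarrow>
              \<not> indep M (resid val xi G1 S) (resid val xj G2 (T \<union> {xi}))"
        using A g(1) g(2) by blast
      thus False using s1 t1 ind by blast
    qed
    moreover have "\<not> is_parent E xj xi"
    proof
      assume p: "is_parent E xj xi"
      have "visible_parent E X xi xj" unfolding visible_parent_def using p ni by blast
      with F1[OF Xs xi xj dist] have "(\<forall>G1\<in>\<G>. \<forall>G2\<in>\<G>. \<forall>S T. S \<subseteq> X - {xi, xj} \<and> T \<subseteq> X - {xj} \<longrightarrow>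
              \<not> indep M (resid val xi G1 S) (resid val xj G2 T)) \<and> (\<exists>G1\<in>\<G>. \<exists>G2\<in>\<G>. \<exists>S T. S \<subseteq> X - {xi} \<and> T \<subseteq> X - {xi, xj} \<and>
              indep M (resid val xi G1 S) (resid val xj G2 T))"
        by (rule iffD1)
      hence A: "\<forall>G1\<in>\<G>. \<forall>G2\<in>\<G>. \<forall>S T. S \<subseteq> X - {xi, xj} \<and> T \<subseteq> X - {xj} \<longrightarrow>
              \<not> indep M (resid val xi G1 S) (resid val xj G2 T)" by (rule conjunct1)
      have "S \<subseteq> X - {xi, xj} \<and> T \<union> {xi} \<subseteq> X - {xj} \<longrightarrow>
              \<not> indep M (resid val xi G1 S) (resid val xj G2 (T \<union> {xi}))"
        using A g(1) g(2) by blast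
      thus False using s2 t1 ind by blast
    qed
    ultimately show ?thesis by blast
  qed
  show ?thesis (is "(?P1 \<longrightarrow> ?C1) \<and> (?P2 \<longrightarrow> ?C2) \<and> (?Q1 \<and> ?Q2 \<longrightarrow> ?C3)")
  proof (intro conjI)
    show "?P1 \<longrightarrow> ?C1"
    proof (rule impI)
      assume h: ?P1 show ?C1 by (rule I[OF h])
    qed
    show "?P2 \<longrightarrow> ?C2"
    proof (rule impI)
      assume h: ?P2 show ?C2 by (rule II[OF h])
    qed
    show "?Q1 \<and> ?Q2 \<longrightarrow> ?C3"
    proof (rule impI)
      assume h: "?Q1 \<and> ?Q2"
      have a: "\<not> invisible E X xi xj \<and> \<not> is_parent E xi xj" by (rule I[OF conjunct1[OF h]])
      have b: "\<not> invisible E X xi xj \<and> \<not> is_parent E xj xi" by (rule II[OF conjunct2[OF h]])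
      show ?C3 using a b unfolding visible_non_edge_def is_parent_def by simp
    qed
  qed
qed

end
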